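(* Let $G=(V,E)$ be a path on $n\ge1$ vertices and let $\{A_v\}_{v\in V}$ be events in a probability space. Then \[ \Pr\Big(\bigcup_{v\in V} A_v\Big) \;\ge\; \frac{1}{\lceil n/2\rceil}\Big(\sum_{v\in V}\Pr(A_v) - \sum_{\{v,w\}\in E}\Pr(A_v\cap A_w)\Big). \] *)

theory Defs
  imports "HOL-Probability.Probability"
begin

end

theory Submission
  imports Defs
begin

definition ff :: "(nat \<Rightarrow> bool) \<Rightarrow> nat \<Rightarrow> real" where
 "ff P n = (\<Sum>i<n. of_bool (P i)) - (\<Sum>i<n - 1. of_bool (P i \<and> P (Suc i)))"

lemma ff_Suc_Suc: "ff P (Suc (Suc m)) = ff P (Suc m) + of_bool (P (Suc m) \<and> \<not> P m)"
  unfolding ff_def by (cases "P m"; cases "P (Suc m)") simp_all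

lemma ff_bound: "ff P n \<le> real ((n+1) div 2) \<and> (n \<ge> 1 \<longrightarrow> \<not> P (n-1) \<longrightarrow> ff P n \<le> real (n div 2))"
proof (induction n)
  case 0
  then show ?case by (simp add: ff_def)
next
  case (Suc n)
  show ?case
  proof (cases n)
    case 0
    then show ?thesis by (simp add: ff_def)
  next
    case (Suc m)
    have IH: "ff P (Suc m) \<le> real ((Suc m+1) div 2)" "\<not> P m \<Longrightarrow> ff P (Suc m) \<le> real (Suc m div 2)"
      using Suc.IH Suc by auto
    have e: "ff P (Suc (Suc m)) = ff P (Suc m) + of_bool (P (Suc m) \<and> \<not> P m)" by (rule ff_Suc_Suc)
    have d1: "real ((Suc m + 1) div 2) \<le> real ((Suc (Suc m) + 1) div 2)" by simp
    have d2: "real (Suc m div 2) + 1 = real ((Suc (Suc m) + 1) div 2)" by simp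
    have d3: "real ((Suc m+1) div 2) = real (Suc (Suc m) div 2)" by simp
    show ?thesis unfolding \<open>n = Suc m\<close>
      using IH e d1 d2 d3 by (cases "P (Suc m)"; cases "P m"; simp; linarith?)
  qed
qed

lemma ff_zero: "(\<And>i. i < n \<Longrightarrow> \<not> P i) \<Longrightarrow> ff P n = 0"
  unfolding ff_def by simp

lemma ceil_half: "real_of_int \<lceil>real n / 2\<rceil> = real ((n+1) div 2)"
proof -
  have "\<lceil>real n / 2\<rceil> = int ((n+1) div 2)"
  proof (cases "even n")
    case True
    then obtain k where "n = 2*k" by blast
    then show ?thesis by simp
  next
    case False
    then obtain k where k: "n = 2*k+1" by (metis oddE)
    have "real n / 2 = real k + 1/2" using k by simp
    then have "\<lceil>real n / 2\<rceil> = int k + 1"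
      by (intro ceiling_unique) auto
    then show ?thesis using k by simp
  qed
  then show ?thesis by simp
qed

theorem mainTheorem6:
  fixes M :: "'a measure" and A :: "nat \<Rightarrow> 'a set" and n :: nat
  assumes "prob_space M"
    and "n \<ge> 1"
    and "\<And>i. i < n \<Longrightarrow> A i \<in> sets M"
  shows "measure M (\<Union>i<n. A i) \<ge>
           (1 / real_of_int \<lceil>real n / 2\<rceil>) *
           ((\<Sum>i<n. measure M (A i)) - (\<Sum>i<n - 1. measure M (A i \<inter> A (Suc i))))"
proof -
  interpret prob_space M by (rule assms(1))
  define k where "k = real ((n+1) div 2)"
  have kpos: "k > 0" using assms(2) unfolding k_def by simp
  have U: "(\<Union>i<n. A i) \<in> sets M" using assms(3) by auto
  have B: "\<And>i. i < n - 1 \<Longrightarrow> A i \<inter> A (Suc i) \<in> sets M" using assms(3) by auto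
  have int1: "\<And>i. i < n \<Longrightarrow> integrable M (indicator (A i) :: 'a \<Rightarrow> real)"
    using assms(3) by (auto intro!: integrable_real_indicator simp: emeasure_eq_measure)
  have int2: "\<And>i. i < n - 1 \<Longrightarrow> integrable M (indicator (A i \<inter> A (Suc i)) :: 'a \<Rightarrow> real)"
    using B by (auto intro!: integrable_real_indicator simp: emeasure_eq_measure)
  have intU: "integrable M (indicator (\<Union>i<n. A i) :: 'a \<Rightarrow> real)"
    using U by (auto intro!: integrable_real_indicator simp: emeasure_eq_measure)
  have s1: "(\<Sum>i<n. measure M (A i)) = (\<integral>x. (\<Sum>i<n. indicator (A i) x) \<partial>M)"
    using int1 assms(3) by (subst Bochner_Integration.integral_sum) auto
  have s2: "(\<Sum>i<n - 1. measure M (A i \<inter> A (Suc i))) = (\<integral>x. (\<Sum>i<n-1. indicator (A i \<inter> A (Suc i)) x) \<partial>M)"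
    using int2 B by (subst Bochner_Integration.integral_sum) auto
  have "(\<Sum>i<n. measure M (A i)) - (\<Sum>i<n - 1. measure M (A i \<inter> A (Suc i)))
      = (\<integral>x. ((\<Sum>i<n. indicator (A i) x) - (\<Sum>i<n-1. indicator (A i \<inter> A (Suc i)) x)) \<partial>M)"
    unfolding s1 s2 using int1 int2
    by (subst Bochner_Integration.integral_diff) auto
  also have "\<dots> \<le> (\<integral>x. k * indicator (\<Union>i<n. A i) x \<partial>M)"
  proof (rule integral_mono)
    show "integrable M (\<lambda>x. (\<Sum>i<n. indicator (A i) x) - (\<Sum>i<n-1. indicator (A i \<inter> A (Suc i)) x) :: real)"
      using int1 int2 by (intro Bochner_Integration.integrable_diff Bochner_Integration.integrable_sum) auto
    show "integrable M (\<lambda>x. k * indicator (\<Union>i<n. A i) x :: real)"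
      using intU by auto
    fix x
    have eq: "(\<Sum>i<n. indicator (A i) x) - (\<Sum>i<n-1. indicator (A i \<inter> A (Suc i)) x) = ff (\<lambda>i. x \<in> A i) n"
      unfolding ff_def by (simp add: indicator_def of_bool_def)
    show "(\<Sum>i<n. indicator (A i) x) - (\<Sum>i<n-1. indicator (A i \<inter> A (Suc i)) x) \<le> k * indicator (\<Union>i<n. A i) x"
    proof (cases "x \<in> (\<Union>i<n. A i)")
      case True
      then show ?thesis unfolding eq k_def using ff_bound[of "\<lambda>i. x \<in> A i" n] by simp
    next
      case False
      then have "ff (\<lambda>i. x \<in> A i) n = 0" by (intro ff_zero) auto
      then show ?thesis unfolding eq using False by simp
    qed
  qed
  also have "\<dots> = k * measure M (\<Union>i<n. A i)"
    using U by simp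
  finally have "(\<Sum>i<n. measure M (A i)) - (\<Sum>i<n - 1. measure M (A i \<inter> A (Suc i))) \<le> k * measure M (\<Union>i<n. A i)" .
  then show ?thesis unfolding ceil_half k_def[symmetric] using kpos
    by (simp add: field_simps)
qed

end
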